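(* There exists $C>0$ such that for all $N$ large enough $$\max_{x\in\mathbb T_N^d}\sup_{\eta\in\mathcal X_N}\Big|E^{\nu_\beta}[f_x\mid\eta_x^\ell]-\tilde f_x(\eta_x^\ell)+\frac{\chi(\eta_x^\ell)}{2\ell_*^d}\frac{\partial^2\tilde f_x}{\partial\rho^2}(\eta_x^\ell)\Big|\le\frac C{\ell^{2d}}.$$
   Context: $\mathbb T_N^d=(\mathbb Z/N\mathbb Z)^d$, $\mathcal X_N=\{0,1\}^{\mathbb T_N^d}$, $(\tau_x\eta)_z=\eta_{z+x}$, $\tau_xh(\eta)=h(\tau_x\eta)$. $\nu_\rho$ denotes the Bernoulli product measure of mean $\rho\in[0,1]$, and $\beta=\frac12$. $\chi(\rho)=\rho(1-\rho)$. $h$ is an $N$-independent local function (depending on finitely many coordinates, supported in a finite box), $\tilde h(\rho)=E^{\nu_\rho}[h]$. Time is fixed and suppressed: $u_x\in[u_-,u_+]$, $0<u_-<u_+<1$, are deterministic values and $f_x(\eta)=\tau_xh(\eta)-\tilde h(u_x)-\tilde h'(u_x)(\eta_x-u_x)$, $\tilde f_x(\rho)=E^{\nu_\rho}[f_x]$. $\ell=\ell(N)$ with $1\ll\ell\ll N$, $\ell_*=2\ell+1$, $\Lambda_{\ell,x}=\{y:|y-x|\le\ell\}$ (a cube with $\ell_*^d$ sites), $\eta_x^\ell=\ell_*^{-d}\sum_{y\in\Lambda_{\ell,x}}\eta_y$. *)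

theory Defs
  imports "HOL-Analysis.Analysis"
begin

text \<open>Sites of the discrete torus (Z/NZ)^d: the index type 'd (finite, CARD('d) = d)
  gives the coordinates; a site is a vector in Z^d with all coordinates in {0..N-1}.\<close>

definition torus :: "nat \<Rightarrow> ('d::finite \<Rightarrow> int) set" where
  "torus N = {z. \<forall>i. 0 \<le> z i \<and> z i < int N}"

definition tor :: "nat \<Rightarrow> ('d::finite \<Rightarrow> int) \<Rightarrow> ('d \<Rightarrow> int)" where
  "tor N y = (\<lambda>i. y i mod int N)"

definition configs :: "nat \<Rightarrow> (('d::finite \<Rightarrow> int) \<Rightarrow> bool) set" where
  "configs N = {\<eta>. \<forall>z. z \<notin> torus N \<longrightarrow> \<eta> z = False}"

definition bern :: "nat \<Rightarrow> real \<Rightarrow> (('d::finite \<Rightarrow> int) \<Rightarrow> bool) \<Rightarrow> real" where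
  "bern N \<rho> \<eta> = (\<Prod>z\<in>torus N. if \<eta> z then \<rho> else 1 - \<rho>)"

definition loc_exp ::
  "('d::finite \<Rightarrow> int) set \<Rightarrow> ((('d \<Rightarrow> int) \<Rightarrow> bool) \<Rightarrow> real) \<Rightarrow> real \<Rightarrow> real" where
  "loc_exp A h \<rho> = (\<Sum>\<xi>\<in>{\<xi>. \<forall>a. a \<notin> A \<longrightarrow> \<xi> a = False}.
       (\<Prod>a\<in>A. if \<xi> a then \<rho> else 1 - \<rho>) * h \<xi>)"

definition shift_loc ::
  "nat \<Rightarrow> ((('d::finite \<Rightarrow> int) \<Rightarrow> bool) \<Rightarrow> real) \<Rightarrow> ('d \<Rightarrow> int) \<Rightarrow> (('d \<Rightarrow> int) \<Rightarrow> bool) \<Rightarrow> real" where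
  "shift_loc N h x \<eta> = h (\<lambda>a. \<eta> (tor N (\<lambda>i. x i + a i)))"

definition fx ::
  "nat \<Rightarrow> ('d::finite \<Rightarrow> int) set \<Rightarrow> ((('d \<Rightarrow> int) \<Rightarrow> bool) \<Rightarrow> real) \<Rightarrow> (('d \<Rightarrow> int) \<Rightarrow> real)
    \<Rightarrow> ('d \<Rightarrow> int) \<Rightarrow> (('d \<Rightarrow> int) \<Rightarrow> bool) \<Rightarrow> real" where
  "fx N A h u x \<eta> = shift_loc N h x \<eta> - loc_exp A h (u x)
      - deriv (loc_exp A h) (u x) * (of_bool (\<eta> x) - u x)"

definition fx_tilde ::
  "nat \<Rightarrow> ('d::finite \<Rightarrow> int) set \<Rightarrow> ((('d \<Rightarrow> int) \<Rightarrow> bool) \<Rightarrow> real) \<Rightarrow> (('d \<Rightarrow> int) \<Rightarrow> real)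
    \<Rightarrow> ('d \<Rightarrow> int) \<Rightarrow> real \<Rightarrow> real" where
  "fx_tilde N A h u x \<rho> = (\<Sum>\<eta>\<in>configs N. bern N \<rho> \<eta> * fx N A h u x \<eta>)"

definition box :: "nat \<Rightarrow> nat \<Rightarrow> ('d::finite \<Rightarrow> int) \<Rightarrow> ('d \<Rightarrow> int) set" where
  "box N l x = {tor N (\<lambda>i. x i + v i) | v. \<forall>i. \<bar>v i\<bar> \<le> int l}"

text \<open>Block average eta_x^l = l_*^{-d} sum_{y in Lambda_{l,x}} eta_y, l_* = 2l+1.\<close>
definition blockavg :: "nat \<Rightarrow> nat \<Rightarrow> ('d::finite \<Rightarrow> int) \<Rightarrow> (('d \<Rightarrow> int) \<Rightarrow> bool) \<Rightarrow> real" where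
  "blockavg N l x \<eta> = (\<Sum>y\<in>box N l x. of_bool (\<eta> y)) / (2 * real l + 1) ^ CARD('d)"

text \<open>Conditional expectation E^{nu_rho}[F | eta_x^l] evaluated at the configuration eta
  (elementary conditional expectation given a discrete random variable on the finite space X_N).\<close>
definition cond_exp_block ::
  "nat \<Rightarrow> real \<Rightarrow> nat \<Rightarrow> ('d::finite \<Rightarrow> int) \<Rightarrow> ((('d \<Rightarrow> int) \<Rightarrow> bool) \<Rightarrow> real)
     \<Rightarrow> (('d \<Rightarrow> int) \<Rightarrow> bool) \<Rightarrow> real" where
  "cond_exp_block N \<rho> l x F \<eta> =
     (\<Sum>\<xi>\<in>{\<xi>\<in>configs N. blockavg N l x \<xi> = blockavg N l x \<eta>}. bern N \<rho> \<xi> * F \<xi>)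
     / (\<Sum>\<xi>\<in>{\<xi>\<in>configs N. blockavg N l x \<xi> = blockavg N l x \<eta>}. bern N \<rho> \<xi>)"

definition chi :: "real \<Rightarrow> real" where
  "chi \<rho> = \<rho> * (1 - \<rho>)"

end

theory Submission
  imports Defs
begin


definition cfg :: "'a set \<Rightarrow> ('a \<Rightarrow> bool) set" where
  "cfg S = {\<xi>. \<forall>z. z \<notin> S \<longrightarrow> \<xi> z = False}"

lemma cfg_empty: "cfg {} = {\<lambda>_. False}"
  by (auto simp: cfg_def)

lemma cfg_insert:
  assumes "t \<notin> S"
  shows "cfg (insert t S) = (\<lambda>(\<xi>,b). \<xi>(t:=b)) ` (cfg S \<times> UNIV)"
proof
  show "cfg (insert t S) \<subseteq> (\<lambda>(\<xi>,b). \<xi>(t:=b)) ` (cfg S \<times> UNIV)"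
  proof
    fix \<xi> assume a: "\<xi> \<in> cfg (insert t S)"
    have "\<xi> = (\<lambda>(\<xi>,b). \<xi>(t:=b)) (\<xi>(t:=False), \<xi> t)" by auto
    moreover have "\<xi>(t:=False) \<in> cfg S" using a by (auto simp: cfg_def)
    ultimately show "\<xi> \<in> (\<lambda>(\<xi>,b). \<xi>(t:=b)) ` (cfg S \<times> UNIV)" by blast
  qed
  show "(\<lambda>(\<xi>,b). \<xi>(t:=b)) ` (cfg S \<times> UNIV) \<subseteq> cfg (insert t S)"
    by (auto simp: cfg_def)
qed

lemma cfg_inj:
  assumes "t \<notin> S"
  shows "inj_on (\<lambda>(\<xi>,b). \<xi>(t:=b)) (cfg S \<times> UNIV)"
proof (rule inj_onI, clarify)
  fix \<xi> b \<xi>' b'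
  assume a: "\<xi> \<in> cfg S" "\<xi>' \<in> cfg S" and e: "\<xi>(t := b) = \<xi>'(t := b')"
  have "b = b'" using fun_cong[OF e, of t] by simp
  moreover have "\<xi> = \<xi>'"
  proof
    fix z show "\<xi> z = \<xi>' z"
    proof (cases "z = t")
      case True thus ?thesis using a assms by (auto simp: cfg_def)
    next
      case False thus ?thesis using fun_cong[OF e, of z] by simp
    qed
  qed
  ultimately show "\<xi> = \<xi>' \<and> b = b'" by simp
qed

lemma finite_cfg: "finite S \<Longrightarrow> finite (cfg S)"
proof (induction S rule: finite_induct)
  case empty thus ?case by (simp add: cfg_empty)
next
  case (insert t S) thus ?case by (simp add: cfg_insert)
qed

lemma sum_cfg_insert:
  assumes "t \<notin> S" "finite S"
  shows "(\<Sum>\<xi>\<in>cfg (insert t S). g \<xi>) = (\<Sum>\<xi>\<in>cfg S. g (\<xi>(t:=True)) + g (\<xi>(t:=False)))"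
proof -
  have "(\<Sum>\<xi>\<in>cfg (insert t S). g \<xi>) = (\<Sum>p\<in>cfg S \<times> UNIV. g ((\<lambda>(\<xi>,b). \<xi>(t:=b)) p))"
    unfolding cfg_insert[OF assms(1)] by (rule sum.reindex[OF cfg_inj[OF assms(1)], unfolded comp_def])
  also have "\<dots> = (\<Sum>\<xi>\<in>cfg S. \<Sum>b\<in>UNIV. g (\<xi>(t:=b)))"
    by (simp add: sum.cartesian_product split_def)
  also have "\<dots> = (\<Sum>\<xi>\<in>cfg S. g (\<xi>(t:=True)) + g (\<xi>(t:=False)))"
    by (simp add: UNIV_bool add.commute)
  finally show ?thesis .
qed

definition dep_on :: "'a set \<Rightarrow> (('a \<Rightarrow> bool) \<Rightarrow> real) \<Rightarrow> bool" where
  "dep_on S G = (\<forall>\<xi> \<xi>'. (\<forall>z\<in>S. \<xi> z = \<xi>' z) \<longrightarrow> G \<xi> = G \<xi>')"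

lemma marginal:
  assumes "finite S" "finite D" "S \<inter> D = {}" "dep_on S G"
  shows "(\<Sum>\<xi>\<in>cfg (S \<union> D). (\<Prod>z\<in>S \<union> D. f z (\<xi> z)) * G \<xi>)
       = (\<Prod>z\<in>D. f z True + f z False) * (\<Sum>\<xi>\<in>cfg S. (\<Prod>z\<in>S. f z (\<xi> z)) * G \<xi>)"
  using assms(2,3)
proof (induction D rule: finite_induct)
  case empty thus ?case by simp
next
  case (insert t D)
  have tS: "t \<notin> S \<union> D" using insert by auto
  have fin: "finite (S \<union> D)" using insert assms by auto
  have G: "G (\<xi>(t:=b)) = G \<xi>" for \<xi> b
    using assms(4) tS unfolding dep_on_def by auto
  have P: "(\<Prod>z\<in>insert t (S \<union> D). f z ((\<xi>(t:=b)) z)) = f t b * (\<Prod>z\<in>S \<union> D. f z (\<xi> z))" for \<xi> b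
  proof -
    have "(\<Prod>z\<in>S \<union> D. f z ((\<xi>(t:=b)) z)) = (\<Prod>z\<in>S \<union> D. f z (\<xi> z))"
      by (rule prod.cong) (use tS in auto)
    thus ?thesis using tS fin by simp
  qed
  have e: "S \<union> insert t D = insert t (S \<union> D)" by auto
  have "(\<Sum>\<xi>\<in>cfg (S \<union> insert t D). (\<Prod>z\<in>S \<union> insert t D. f z (\<xi> z)) * G \<xi>)
      = (\<Sum>\<xi>\<in>cfg (S \<union> D). (f t True + f t False) * ((\<Prod>z\<in>S \<union> D. f z (\<xi> z)) * G \<xi>))"
    unfolding e sum_cfg_insert[OF tS fin]
    by (rule sum.cong[OF refl]) (simp only: P G, simp add: algebra_simps)
  also have "\<dots> = (f t True + f t False) * (\<Sum>\<xi>\<in>cfg (S \<union> D). (\<Prod>z\<in>S \<union> D. f z (\<xi> z)) * G \<xi>)"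
    by (simp add: sum_distrib_left)
  also have "\<dots> = (\<Prod>z\<in>insert t D. f z True + f z False) * (\<Sum>\<xi>\<in>cfg S. (\<Prod>z\<in>S. f z (\<xi> z)) * G \<xi>)"
    using insert by simp
  finally show ?case .
qed

definition cb :: "nat \<Rightarrow> nat \<Rightarrow> nat \<Rightarrow> nat" where
  "cb w k j = (if j \<le> k then w choose (k - j) else 0)"

lemma cb_pascal: "cb (Suc w) k j = (if k \<ge> 1 then cb w (k - 1) j else 0) + cb w k j"
proof (cases "j < k")
  case True
  hence e: "k - j = Suc (k - 1 - j)" by arith
  show ?thesis unfolding cb_def using True by (simp only: e binomial_Suc_Suc) simp
next
  case False thus ?thesis unfolding cb_def by (cases "k = j") auto
qed



lemma counting:
  assumes "finite S" "finite D" "S \<inter> D = {}" "W \<subseteq> D" "dep_on S G"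
  shows "(\<Sum>\<xi>\<in>cfg (S \<union> D). if card {z\<in>S \<union> W. \<xi> z} = k then G \<xi> else 0)
       = 2 ^ card (D - W) * (\<Sum>\<zeta>\<in>cfg S. G \<zeta> * real (cb (card W) k (card {z\<in>S. \<zeta> z})))"
  using assms(2,3,4)
proof (induction D arbitrary: W k rule: finite_induct)
  case empty
  hence W: "W = {}" by auto
  show ?case unfolding W by (simp add: cb_def, rule sum.cong[OF refl], simp)
next
  case (insert t D)
  have tS: "t \<notin> S \<union> D" using insert by auto
  have fin: "finite (S \<union> D)" using insert assms by auto
  have G: "G (\<xi>(t:=b)) = G \<xi>" for \<xi> b
    using assms(5) tS unfolding dep_on_def by auto
  have e: "S \<union> insert t D = insert t (S \<union> D)" by auto
  have dis: "S \<inter> D = {}" using insert by auto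
  have fS: "finite (S \<union> X)" if "X \<subseteq> D" for X using that insert assms(1) finite_subset by blast
  show ?case
  proof (cases "t \<in> W")
    case True
    define W0 where "W0 = W - {t}"
    have W0: "W0 \<subseteq> D" "W = insert t W0" "t \<notin> W0" using True insert unfolding W0_def by auto
    have c1: "card {z\<in>S \<union> W. (\<xi>(t:=True)) z} = Suc (card {z\<in>S \<union> W0. \<xi> z})" for \<xi>
    proof -
      have "{z\<in>S \<union> W. (\<xi>(t:=True)) z} = insert t {z\<in>S \<union> W0. \<xi> z}" using W0 tS by auto
      moreover have "finite {z\<in>S \<union> W0. \<xi> z}" using fS[OF W0(1)] by simp
      moreover have "t \<notin> {z\<in>S \<union> W0. \<xi> z}" using W0 tS by auto
      ultimately show ?thesis by simp
    qed
    have c0: "card {z\<in>S \<union> W. (\<xi>(t:=False)) z} = card {z\<in>S \<union> W0. \<xi> z}" for \<xi>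
    proof -
      have "{z\<in>S \<union> W. (\<xi>(t:=False)) z} = {z\<in>S \<union> W0. \<xi> z}" using W0 tS by auto
      thus ?thesis by simp
    qed
    have "(\<Sum>\<xi>\<in>cfg (S \<union> insert t D). if card {z\<in>S \<union> W. \<xi> z} = k then G \<xi> else 0)
      = (\<Sum>\<xi>\<in>cfg (S \<union> D). (if k \<ge> 1 then (if card {z\<in>S \<union> W0. \<xi> z} = k - 1 then G \<xi> else 0) else 0)
           + (if card {z\<in>S \<union> W0. \<xi> z} = k then G \<xi> else 0))"
      unfolding e sum_cfg_insert[OF tS fin]
      by (rule sum.cong[OF refl]) (simp only: c1 c0 G, auto)
    also have "\<dots> = (if k \<ge> 1 then (\<Sum>\<xi>\<in>cfg (S \<union> D). if card {z\<in>S \<union> W0. \<xi> z} = k - 1 then G \<xi> else 0) else 0)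
           + (\<Sum>\<xi>\<in>cfg (S \<union> D). if card {z\<in>S \<union> W0. \<xi> z} = k then G \<xi> else 0)"
      by (simp add: sum.distrib)
    also have "\<dots> = (if k \<ge> 1 then 2 ^ card (D - W0) * (\<Sum>\<zeta>\<in>cfg S. G \<zeta> * real (cb (card W0) (k - 1) (card {z\<in>S. \<zeta> z}))) else 0)
       + 2 ^ card (D - W0) * (\<Sum>\<zeta>\<in>cfg S. G \<zeta> * real (cb (card W0) k (card {z\<in>S. \<zeta> z})))"
      using insert.IH[OF dis W0(1)] by simp
    also have "\<dots> = 2 ^ card (D - W0) * (\<Sum>\<zeta>\<in>cfg S. G \<zeta> * real (cb (Suc (card W0)) k (card {z\<in>S. \<zeta> z})))"
    proof (cases "k \<ge> 1")
      case True
      have "(\<Sum>\<zeta>\<in>cfg S. G \<zeta> * real (cb (Suc (card W0)) k (card {z\<in>S. \<zeta> z})))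
        = (\<Sum>\<zeta>\<in>cfg S. G \<zeta> * real (cb (card W0) (k - 1) (card {z\<in>S. \<zeta> z})))
          + (\<Sum>\<zeta>\<in>cfg S. G \<zeta> * real (cb (card W0) k (card {z\<in>S. \<zeta> z})))"
        unfolding cb_pascal using True by (simp add: sum.distrib[symmetric] distrib_left)
      thus ?thesis using True by (simp add: distrib_left)
    next
      case False
      have "(\<Sum>\<zeta>\<in>cfg S. G \<zeta> * real (cb (Suc (card W0)) k (card {z\<in>S. \<zeta> z})))
        = (\<Sum>\<zeta>\<in>cfg S. G \<zeta> * real (cb (card W0) k (card {z\<in>S. \<zeta> z})))"
        unfolding cb_pascal using False by simp
      thus ?thesis using False by simp
    qed
    also have "card (D - W0) = card (insert t D - W)" proof -
      have "insert t D - W = D - W0" using W0 insert by auto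
      thus ?thesis by simp
    qed
    also have "Suc (card W0) = card W" proof -
      have "finite W0" using W0(1) insert(1) finite_subset by blast
      thus ?thesis using W0 by simp
    qed
    finally show ?thesis .
  next
    case False
    hence W: "W \<subseteq> D" using insert by auto
    have c: "card {z\<in>S \<union> W. (\<xi>(t:=b)) z} = card {z\<in>S \<union> W. \<xi> z}" for \<xi> b
    proof -
      have "{z\<in>S \<union> W. (\<xi>(t:=b)) z} = {z\<in>S \<union> W. \<xi> z}" using W False tS by auto
      thus ?thesis by simp
    qed
    have "(\<Sum>\<xi>\<in>cfg (S \<union> insert t D). if card {z\<in>S \<union> W. \<xi> z} = k then G \<xi> else 0)
      = (\<Sum>\<xi>\<in>cfg (S \<union> D). 2 * (if card {z\<in>S \<union> W. \<xi> z} = k then G \<xi> else 0))"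
      unfolding e sum_cfg_insert[OF tS fin]
    proof (rule sum.cong[OF refl])
      fix \<xi>
      have a: "card {z\<in>S \<union> W. (\<xi>(t:=True)) z} = card {z\<in>S \<union> W. \<xi> z}" by (rule c)
      have b: "card {z\<in>S \<union> W. (\<xi>(t:=False)) z} = card {z\<in>S \<union> W. \<xi> z}" by (rule c)
      show "(if card {z\<in>S \<union> W. (\<xi>(t:=True)) z} = k then G (\<xi>(t:=True)) else 0) +
         (if card {z\<in>S \<union> W. (\<xi>(t:=False)) z} = k then G (\<xi>(t:=False)) else 0) =
         2 * (if card {z\<in>S \<union> W. \<xi> z} = k then G \<xi> else 0)"
        unfolding a b G by simp
    qed
    also have "\<dots> = 2 * 2 ^ card (D - W) * (\<Sum>\<zeta>\<in>cfg S. G \<zeta> * real (cb (card W) k (card {z\<in>S. \<zeta> z})))"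
      using insert.IH[OF dis W] by (simp add: sum_distrib_left[symmetric])
    also have "2 * 2 ^ card (D - W) = (2::real) ^ card (insert t D - W)"
    proof -
      have "insert t D - W = insert t (D - W)" using False by auto
      thus ?thesis using insert by simp
    qed
    finally show ?thesis .
  qed
qed



definition tri :: "nat \<Rightarrow> real" where "tri j = real j * (real j - 1) / 2"
definition ffr :: "real \<Rightarrow> real \<Rightarrow> nat \<Rightarrow> real" where "ffr \<rho> \<epsilon> j = (\<Prod>i<j. \<rho> - real i * \<epsilon>)"

lemma tri_Suc: "tri (Suc j) = tri j + real j"
proof -
  have "real (Suc j) * (real (Suc j) - 1) = real j * (real j - 1) + 2 * real j" by (simp add: algebra_simps)
  thus ?thesis unfolding tri_def by simp
qed

lemma tri_mono: "i \<le> j \<Longrightarrow> tri i \<le> tri j"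
proof (induction j rule: dec_induct)
  case base thus ?case by simp
next
  case (step n) thus ?case using tri_Suc[of n] by simp
qed

lemma tri_nonneg: "tri j \<ge> 0"
  using tri_mono[of 0 j] by (simp add: tri_def)

lemma abs_mult_le: "\<bar>x\<bar> \<le> X \<Longrightarrow> \<bar>y\<bar> \<le> Y \<Longrightarrow> \<bar>x * y\<bar> \<le> X * (Y::real)"
  by (simp add: abs_mult mult_mono')

lemma ffr_exp: "\<exists>c\<ge>0. \<forall>\<rho> \<epsilon>. 0 \<le> \<rho> \<and> \<rho> \<le> 1 \<and> 0 \<le> \<epsilon> \<and> \<epsilon> \<le> 1 \<longrightarrow>
   \<bar>ffr \<rho> \<epsilon> j - \<rho> ^ j + tri j * \<epsilon> * \<rho> ^ (j - 1)\<bar> \<le> c * \<epsilon>\<^sup>2"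
proof (induction j)
  case 0 thus ?case by (auto simp: ffr_def tri_def)
next
  case (Suc j)
  then obtain c where c0: "c \<ge> 0" and c: "\<And>\<rho> \<epsilon>. 0 \<le> \<rho> \<Longrightarrow> \<rho> \<le> 1 \<Longrightarrow> 0 \<le> \<epsilon> \<Longrightarrow> \<epsilon> \<le> 1 \<Longrightarrow>
     \<bar>ffr \<rho> \<epsilon> j - \<rho> ^ j + tri j * \<epsilon> * \<rho> ^ (j - 1)\<bar> \<le> c * \<epsilon>\<^sup>2" by blast
  show ?case
  proof (intro exI[of _ "real j * tri j + c * (1 + real j)"] conjI allI impI)
    show "0 \<le> real j * tri j + c * (1 + real j)" using c0 tri_nonneg by simp
    fix \<rho> \<epsilon> :: real assume a: "0 \<le> \<rho> \<and> \<rho> \<le> 1 \<and> 0 \<le> \<epsilon> \<and> \<epsilon> \<le> 1"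
    define R where "R = ffr \<rho> \<epsilon> j - \<rho> ^ j + tri j * \<epsilon> * \<rho> ^ (j - 1)"
    have R: "\<bar>R\<bar> \<le> c * \<epsilon>\<^sup>2" using c a unfolding R_def by blast
    have tp: "tri j * \<rho> ^ (j - 1) * \<rho> = tri j * \<rho> ^ j"
      by (cases j) (auto simp: tri_def)
    have ffS: "ffr \<rho> \<epsilon> (Suc j) = ffr \<rho> \<epsilon> j * (\<rho> - real j * \<epsilon>)" by (simp add: ffr_def)
    have key: "ffr \<rho> \<epsilon> (Suc j) - \<rho> ^ Suc j + tri (Suc j) * \<epsilon> * \<rho> ^ (Suc j - 1)
       = real j * tri j * \<epsilon>\<^sup>2 * \<rho> ^ (j - 1) + R * (\<rho> - real j * \<epsilon>)"
    proof -
      have "ffr \<rho> \<epsilon> j = \<rho> ^ j - tri j * \<epsilon> * \<rho> ^ (j - 1) + R" unfolding R_def by simp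
      hence "ffr \<rho> \<epsilon> (Suc j) - \<rho> ^ Suc j + tri (Suc j) * \<epsilon> * \<rho> ^ (Suc j - 1)
          = (\<rho> ^ j - tri j * \<epsilon> * \<rho> ^ (j - 1) + R) * (\<rho> - real j * \<epsilon>) - \<rho> ^ Suc j + (tri j + real j) * \<epsilon> * \<rho> ^ j"
        unfolding ffS tri_Suc by simp
      also have "\<dots> = real j * tri j * \<epsilon>\<^sup>2 * \<rho> ^ (j - 1) + R * (\<rho> - real j * \<epsilon>) - \<epsilon> * (tri j * \<rho> ^ (j - 1) * \<rho>) + \<epsilon> * (tri j * \<rho> ^ j)"
        by (simp add: algebra_simps power2_eq_square)
      finally show ?thesis unfolding tp by simp
    qed
    have b1: "\<bar>real j * tri j * \<epsilon>\<^sup>2 * \<rho> ^ (j - 1)\<bar> \<le> real j * tri j * \<epsilon>\<^sup>2"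
    proof -
      have "\<bar>\<rho> ^ (j - 1)\<bar> \<le> 1" using a by (simp add: power_le_one)
      hence "\<bar>(real j * tri j * \<epsilon>\<^sup>2) * \<rho> ^ (j - 1)\<bar> \<le> (real j * tri j * \<epsilon>\<^sup>2) * 1"
        using tri_nonneg by (intro abs_mult_le) auto
      thus ?thesis by simp
    qed
    have b2: "\<bar>R * (\<rho> - real j * \<epsilon>)\<bar> \<le> c * \<epsilon>\<^sup>2 * (1 + real j)"
    proof (intro abs_mult_le[OF R])
      have "\<epsilon> * real j \<le> real j" using a by (intro mult_left_le_one_le) auto
      hence x: "real j * \<epsilon> \<le> real j" by (simp add: mult.commute)
      have y: "0 \<le> real j * \<epsilon>" using a by simp
      show "\<bar>\<rho> - real j * \<epsilon>\<bar> \<le> 1 + real j" unfolding abs_le_iff using a x y by linarith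
    qed
    have "\<bar>ffr \<rho> \<epsilon> (Suc j) - \<rho> ^ Suc j + tri (Suc j) * \<epsilon> * \<rho> ^ (Suc j - 1)\<bar>
       \<le> real j * tri j * \<epsilon>\<^sup>2 + c * \<epsilon>\<^sup>2 * (1 + real j)"
      unfolding key using b1 b2 by linarith
    thus "\<bar>ffr \<rho> \<epsilon> (Suc j) - \<rho> ^ Suc j + tri (Suc j) * \<epsilon> * \<rho> ^ (Suc j - 1)\<bar>
       \<le> (real j * tri j + c * (1 + real j)) * \<epsilon>\<^sup>2" by (simp add: algebra_simps)
  qed
qed

definition Lf :: "nat \<Rightarrow> nat \<Rightarrow> real \<Rightarrow> real" where
  "Lf m j \<rho> = tri m * \<rho> ^ j * (1 - \<rho>) ^ (m - j) - tri j * \<rho> ^ (j - 1) * (1 - \<rho>) ^ (m - j)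
     - tri (m - j) * \<rho> ^ j * (1 - \<rho>) ^ (m - j - 1)"

lemma ffr_one_lower:
  assumes "0 \<le> \<epsilon>" "2 * real m * \<epsilon> \<le> 1"
  shows "ffr 1 \<epsilon> m \<ge> (1/2) ^ m"
proof -
  have "(\<Prod>i<m. (1/2::real)) \<le> (\<Prod>i<m. 1 - real i * \<epsilon>)"
  proof (rule prod_mono)
    fix i assume "i \<in> {..<m}"
    hence "real i \<le> real m" by simp
    hence "real i * \<epsilon> \<le> real m * \<epsilon>" using assms by (intro mult_right_mono) auto
    thus "0 \<le> (1/2::real) \<and> 1/2 \<le> 1 - real i * \<epsilon>" using assms by auto
  qed
  thus ?thesis by (simp add: ffr_def)
qed

lemma poly_main:
  "\<exists>K. \<forall>j\<le>m. \<forall>\<rho> \<epsilon>. 0 \<le> \<rho> \<and> \<rho> \<le> 1 \<and> 0 < \<epsilon> \<and> \<epsilon> \<le> 1 \<and> 2 * real m * \<epsilon> \<le> 1 \<longrightarrow>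
     \<bar>ffr \<rho> \<epsilon> j * ffr (1 - \<rho>) \<epsilon> (m - j) / ffr 1 \<epsilon> m - \<rho> ^ j * (1 - \<rho>) ^ (m - j) - \<epsilon> * Lf m j \<rho>\<bar>
       \<le> K * \<epsilon>\<^sup>2"
proof -
  have "\<forall>j. \<exists>c\<ge>0. \<forall>\<rho> \<epsilon>. 0 \<le> \<rho> \<and> \<rho> \<le> 1 \<and> 0 \<le> \<epsilon> \<and> \<epsilon> \<le> 1 \<longrightarrow>
   \<bar>ffr \<rho> \<epsilon> j - \<rho> ^ j + tri j * \<epsilon> * \<rho> ^ (j - 1)\<bar> \<le> c * \<epsilon>\<^sup>2" using ffr_exp by blast
  then obtain cf where cf: "\<And>j. cf j \<ge> 0" "\<And>j \<rho> \<epsilon>. 0 \<le> \<rho> \<Longrightarrow> \<rho> \<le> 1 \<Longrightarrow> 0 \<le> \<epsilon> \<Longrightarrow> \<epsilon> \<le> 1 \<Longrightarrow>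
   \<bar>ffr \<rho> \<epsilon> j - \<rho> ^ j + tri j * \<epsilon> * \<rho> ^ (j - 1)\<bar> \<le> cf j * \<epsilon>\<^sup>2"
    by metis
  define C where "C = (\<Sum>j\<le>m. cf j)"
  have C0: "C \<ge> 0" unfolding C_def using cf(1) by (simp add: sum_nonneg)
  have cfC: "cf j \<le> C" if "j \<le> m" for j
    unfolding C_def using that cf(1) by (intro member_le_sum) auto
  define T where "T = tri m"
  have T0: "T \<ge> 0" unfolding T_def by (rule tri_nonneg)
  define K0 where "K0 = T * T + 2 * C + 2 * T * C + C * C + 3 * T * T + C * (1 + 3 * T)"
  show ?thesis
  proof (intro exI[of _ "K0 * 2 ^ m"] allI impI)
    fix j :: nat and \<rho> \<epsilon> :: real assume jm: "j \<le> m" and a: "0 \<le> \<rho> \<and> \<rho> \<le> 1 \<and> 0 < \<epsilon> \<and> \<epsilon> \<le> 1 \<and> 2 * real m * \<epsilon> \<le> 1"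
    hence r0: "0 \<le> \<rho>" and r1: "\<rho> \<le> 1" and e0: "0 < \<epsilon>" and e1: "\<epsilon> \<le> 1" and em: "2 * real m * \<epsilon> \<le> 1" by auto
    define i where "i = m - j"
    define a where "a = \<rho> ^ j"
    define b where "b = (1 - \<rho>) ^ i"
    define A1 where "A1 = tri j * \<rho> ^ (j - 1)"
    define B1 where "B1 = tri i * (1 - \<rho>) ^ (i - 1)"
    define X where "X = ffr \<rho> \<epsilon> j"
    define Y where "Y = ffr (1 - \<rho>) \<epsilon> i"
    define Z where "Z = ffr 1 \<epsilon> m"
    define L where "L = Lf m j \<rho>"
    define R1 where "R1 = X - a + \<epsilon> * A1"
    define R2 where "R2 = Y - b + \<epsilon> * B1"
    define R3 where "R3 = Z - 1 + \<epsilon> * T"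
    have im: "i \<le> m" unfolding i_def by simp
    have R1: "\<bar>R1\<bar> \<le> C * \<epsilon>\<^sup>2"
    proof -
      have "\<bar>R1\<bar> \<le> cf j * \<epsilon>\<^sup>2" using cf(2)[of \<rho> \<epsilon> j] a unfolding R1_def X_def a_def A1_def by (simp add: algebra_simps)
      also have "\<dots> \<le> C * \<epsilon>\<^sup>2" using cfC[OF jm] by (intro mult_right_mono) auto
      finally show ?thesis .
    qed
    have R2: "\<bar>R2\<bar> \<le> C * \<epsilon>\<^sup>2"
    proof -
      have "\<bar>R2\<bar> \<le> cf i * \<epsilon>\<^sup>2" using cf(2)[of "1 - \<rho>" \<epsilon> i] a unfolding R2_def Y_def b_def B1_def by (simp add: algebra_simps)
      also have "\<dots> \<le> C * \<epsilon>\<^sup>2" using cfC[OF im] by (intro mult_right_mono) auto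
      finally show ?thesis .
    qed
    have R3: "\<bar>R3\<bar> \<le> C * \<epsilon>\<^sup>2"
    proof -
      have "\<bar>R3\<bar> \<le> cf m * \<epsilon>\<^sup>2" using cf(2)[of 1 \<epsilon> m] a unfolding R3_def Z_def T_def by (simp add: algebra_simps)
      also have "\<dots> \<le> C * \<epsilon>\<^sup>2" using cfC[of m] by (intro mult_right_mono) auto
      finally show ?thesis .
    qed
    have ab: "\<bar>a\<bar> \<le> 1" "\<bar>b\<bar> \<le> 1" unfolding a_def b_def using r0 r1 by (auto simp: power_le_one abs_of_nonneg)
    have A1: "\<bar>A1\<bar> \<le> T"
    proof -
      have "\<bar>A1\<bar> \<le> tri j * 1" unfolding A1_def abs_mult using tri_nonneg[of j] r0 r1
        by (intro mult_mono) (auto simp: power_le_one)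
      also have "\<dots> \<le> T" unfolding T_def using tri_mono[OF jm] by simp
      finally show ?thesis .
    qed
    have B1: "\<bar>B1\<bar> \<le> T"
    proof -
      have "\<bar>B1\<bar> \<le> tri i * 1" unfolding B1_def abs_mult using tri_nonneg[of i] r0 r1
        by (intro mult_mono) (auto simp: power_le_one)
      also have "\<dots> \<le> T" unfolding T_def using tri_mono[OF im] by simp
      finally show ?thesis .
    qed
    have Ld: "L = T * a * b - A1 * b - a * B1"
      unfolding L_def Lf_def T_def a_def b_def A1_def B1_def i_def by (simp add: algebra_simps)
    have L: "\<bar>L\<bar> \<le> 3 * T"
    proof -
      have "\<bar>T * a * b\<bar> \<le> T * 1 * 1" using ab T0 by (intro abs_mult_le) (auto simp: abs_mult)
      moreover have "\<bar>A1 * b\<bar> \<le> T * 1" using ab A1 by (intro abs_mult_le) auto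
      moreover have "\<bar>a * B1\<bar> \<le> 1 * T" using ab B1 by (intro abs_mult_le) auto
      ultimately show ?thesis unfolding Ld by linarith
    qed
    have ee: "\<bar>\<epsilon>\<bar> \<le> 1" "\<epsilon>\<^sup>2 \<ge> 0" using e0 e1 by auto
    have e2le: "\<epsilon>\<^sup>2 \<le> 1" using e0 e1 by (simp add: power_le_one)
    define E where "E = \<epsilon>\<^sup>2 * A1 * B1 + a * R2 - \<epsilon> * A1 * R2 + R1 * b - \<epsilon> * R1 * B1 + R1 * R2
       + T * \<epsilon>\<^sup>2 * L - R3 * (a * b + \<epsilon> * L)"
    have XYZ: "X * Y - Z * (a * b + \<epsilon> * L) = E"
    proof -
      have x: "X = a - \<epsilon> * A1 + R1" and y: "Y = b - \<epsilon> * B1 + R2" and z: "Z = 1 - \<epsilon> * T + R3"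
        unfolding R1_def R2_def R3_def by simp_all
      show ?thesis unfolding E_def x y z Ld by (simp add: algebra_simps power2_eq_square)
    qed
    have Eb: "\<bar>E\<bar> \<le> K0 * \<epsilon>\<^sup>2"
    proof -
      have t1: "\<bar>\<epsilon>\<^sup>2 * A1 * B1\<bar> \<le> \<epsilon>\<^sup>2 * T * T" by (intro abs_mult_le A1 B1) simp
      have t2: "\<bar>a * R2\<bar> \<le> 1 * (C * \<epsilon>\<^sup>2)" by (intro abs_mult_le ab R2)
      have t3: "\<bar>\<epsilon> * A1 * R2\<bar> \<le> 1 * T * (C * \<epsilon>\<^sup>2)" by (intro abs_mult_le ee A1 R2)
      have t4: "\<bar>R1 * b\<bar> \<le> (C * \<epsilon>\<^sup>2) * 1" by (intro abs_mult_le ab R1)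
      have t5: "\<bar>\<epsilon> * R1 * B1\<bar> \<le> 1 * (C * \<epsilon>\<^sup>2) * T" by (intro abs_mult_le ee B1 R1)
      have t6': "\<bar>R1 * R2\<bar> \<le> (C * \<epsilon>\<^sup>2) * (C * \<epsilon>\<^sup>2)" by (intro abs_mult_le R1 R2)
      have "(C * \<epsilon>\<^sup>2) * (C * \<epsilon>\<^sup>2) = (C * C * \<epsilon>\<^sup>2) * \<epsilon>\<^sup>2" by (simp add: algebra_simps)
      also have "\<dots> \<le> (C * C * \<epsilon>\<^sup>2) * 1" using e2le C0 by (intro mult_left_mono) auto
      finally have t6: "\<bar>R1 * R2\<bar> \<le> C * C * \<epsilon>\<^sup>2" using t6' by simp
      have tt: "\<bar>T * \<epsilon>\<^sup>2\<bar> = T * \<epsilon>\<^sup>2" using T0 by (simp add: abs_mult)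
      have t7: "\<bar>T * \<epsilon>\<^sup>2 * L\<bar> \<le> T * \<epsilon>\<^sup>2 * (3 * T)" by (rule abs_mult_le[OF _ L]) (simp add: tt)
      have abL: "\<bar>a * b + \<epsilon> * L\<bar> \<le> 1 + 3 * T"
      proof -
        have "\<bar>a * b\<bar> \<le> 1 * 1" by (intro abs_mult_le ab)
        moreover have "\<bar>\<epsilon> * L\<bar> \<le> 1 * (3 * T)" by (intro abs_mult_le ee L)
        ultimately show ?thesis by linarith
      qed
      have t8: "\<bar>R3 * (a * b + \<epsilon> * L)\<bar> \<le> (C * \<epsilon>\<^sup>2) * (1 + 3 * T)" by (intro abs_mult_le R3 abL)
      have "\<bar>E\<bar> \<le> \<epsilon>\<^sup>2 * T * T + 1 * (C * \<epsilon>\<^sup>2) + 1 * T * (C * \<epsilon>\<^sup>2) + (C * \<epsilon>\<^sup>2) * 1 + 1 * (C * \<epsilon>\<^sup>2) * T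
          + C * C * \<epsilon>\<^sup>2 + T * \<epsilon>\<^sup>2 * (3 * T) + (C * \<epsilon>\<^sup>2) * (1 + 3 * T)"
        unfolding E_def using t1 t2 t3 t4 t5 t6 t7 t8 by linarith
      also have "\<dots> = K0 * \<epsilon>\<^sup>2" unfolding K0_def by (simp add: algebra_simps)
      finally show ?thesis .
    qed
    have Zl: "Z \<ge> (1/2) ^ m" unfolding Z_def using ffr_one_lower e0 em by auto
    have Zp: "Z > 0" using Zl by (meson less_le_trans zero_less_divide_1_iff zero_less_numeral zero_less_power)
    have "X * Y / Z - a * b - \<epsilon> * L = E / Z" using Zp XYZ[symmetric] by (simp add: field_simps)
    hence "\<bar>X * Y / Z - a * b - \<epsilon> * L\<bar> = \<bar>E\<bar> / Z" using Zp by simp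
    also have "\<dots> \<le> \<bar>E\<bar> * 2 ^ m"
    proof -
      have "1 / Z \<le> 1 / (1/2) ^ m" using Zl Zp by (intro divide_left_mono) auto
      hence "1 / Z \<le> 2 ^ m" by (simp add: power_one_over)
      hence "\<bar>E\<bar> * (1 / Z) \<le> \<bar>E\<bar> * 2 ^ m" by (intro mult_left_mono) auto
      thus ?thesis by simp
    qed
    also have "\<dots> \<le> K0 * \<epsilon>\<^sup>2 * 2 ^ m" using Eb by (intro mult_right_mono) auto
    finally show "\<bar>ffr \<rho> \<epsilon> j * ffr (1 - \<rho>) \<epsilon> (m - j) / ffr 1 \<epsilon> m - \<rho> ^ j * (1 - \<rho>) ^ (m - j) - \<epsilon> * Lf m j \<rho>\<bar>
       \<le> K0 * 2 ^ m * \<epsilon>\<^sup>2"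
      unfolding X_def Y_def Z_def a_def b_def L_def i_def by (simp add: algebra_simps)
  qed
qed



definition ffp :: "nat \<Rightarrow> nat \<Rightarrow> real" where "ffp a j = (\<Prod>i<j. real a - real i)"

lemma ffp_eq: "ffp a j = (if j \<le> a then fact a / fact (a - j) else 0)"
proof (induction j)
  case 0 thus ?case by (simp add: ffp_def)
next
  case (Suc j)
  have s: "ffp a (Suc j) = ffp a j * (real a - real j)" by (simp add: ffp_def)
  show ?case
  proof (cases "Suc j \<le> a")
    case True
    hence e: "a - j = Suc (a - Suc j)" by arith
    have f: "fact (a - j) = (real a - real j) * fact (a - Suc j)" unfolding e using True by simp
    have nz: "real a - real j \<noteq> 0" using True by simp
    have "fact a / fact (a - j) * (real a - real j) = (fact a :: real) / fact (a - Suc j)"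
      unfolding f using nz by (simp add: field_simps)
    thus ?thesis unfolding s Suc using True by simp
  next
    case False
    thus ?thesis unfolding s Suc by (cases "j = a") auto
  qed
qed

lemma ffr_ffp: "n > 0 \<Longrightarrow> ffr (real k / real n) (1 / real n) j = ffp k j / real n ^ j"
proof -
  assume n: "n > 0"
  have "(\<Prod>i<j. real k / real n - real i * (1 / real n)) = (\<Prod>i<j. (real k - real i) / real n)"
    by (simp add: diff_divide_distrib)
  also have "\<dots> = (\<Prod>i<j. real k - real i) / real n ^ j" by (simp add: prod_dividef)
  finally show ?thesis unfolding ffr_def ffp_def .
qed

lemma ratio_ffr:
  assumes "j \<le> m" "m \<le> n" "k \<le> n" "n > 0"
  shows "real (cb (n - m) k j) / real (n choose k)
       = ffr (real k / real n) (1 / real n) j * ffr (1 - real k / real n) (1 / real n) (m - j) / ffr 1 (1 / real n) m"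
proof -
  have n0: "real n \<noteq> 0" using assms by simp
  have e1: "1 - real k / real n = real (n - k) / real n" using assms n0 by (simp add: field_simps)
  have e2: "(1::real) = real n / real n" using n0 by simp
  have "ffr 1 (1 / real n) m = ffp n m / real n ^ m" using ffr_ffp[OF assms(4), of n m] e2 by simp
  hence rhs: "ffr (real k / real n) (1 / real n) j * ffr (1 - real k / real n) (1 / real n) (m - j) / ffr 1 (1 / real n) m
     = ffp k j * ffp (n - k) (m - j) / ffp n m"
    unfolding e1 ffr_ffp[OF assms(4)] using n0 assms
    by (simp add: field_simps power_add[symmetric])
  have fnm: "ffp n m = fact n / fact (n - m)" using assms ffp_eq by simp
  have Cnk: "real (n choose k) = fact n / (fact k * fact (n - k))" using assms binomial_fact by blast
  show ?thesis
  proof (cases "j \<le> k \<and> m - j \<le> n - k")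
    case True
    have kj: "k - j \<le> n - m" using True assms by arith
    have cbv: "real (cb (n - m) k j) = fact (n - m) / (fact (k - j) * fact (n - m - (k - j)))"
      unfolding cb_def using True binomial_fact[OF kj] by simp
    have nn: "n - m - (k - j) = n - k - (m - j)" using True assms by arith
    show ?thesis unfolding rhs fnm Cnk cbv nn using True ffp_eq[of k j] ffp_eq[of "n - k" "m - j"]
      by (simp add: field_simps)
  next
    case False
    hence z1: "cb (n - m) k j = 0" unfolding cb_def using assms by (auto intro!: binomial_eq_0)
    have z2: "ffp k j * ffp (n - k) (m - j) = 0" using False ffp_eq[of k j] ffp_eq[of "n - k" "m - j"] by auto
    show ?thesis unfolding rhs z1 using z2 by simp
  qed
qed

definition pp :: "nat \<Rightarrow> nat \<Rightarrow> real \<Rightarrow> real" where "pp a b \<rho> = \<rho> ^ a * (1 - \<rho>) ^ b"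
definition d1 :: "nat \<Rightarrow> nat \<Rightarrow> real \<Rightarrow> real" where
  "d1 a b \<rho> = real a * \<rho> ^ (a - 1) * (1 - \<rho>) ^ b - real b * \<rho> ^ a * (1 - \<rho>) ^ (b - 1)"
definition d2 :: "nat \<Rightarrow> nat \<Rightarrow> real \<Rightarrow> real" where
  "d2 a b \<rho> = real a * (real a - 1) * \<rho> ^ (a - 2) * (1 - \<rho>) ^ b
     - 2 * real a * real b * \<rho> ^ (a - 1) * (1 - \<rho>) ^ (b - 1)
     + real b * (real b - 1) * \<rho> ^ a * (1 - \<rho>) ^ (b - 2)"

lemma nat_m1: "real a * real (a - 1) = real a * (real a - 1)"
  by (cases a) auto

lemma nm1': "real a * (real (a - Suc 0) * x) = real a * (real a - 1) * x"
  by (cases a) auto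

lemma rsub: "real (a - Suc 0) = (if a = 0 then 0 else real a - 1)"
  by auto

lemma pp_deriv: "(pp a b has_field_derivative d1 a b \<rho>) (at \<rho>)"
  unfolding pp_def d1_def
  by (auto intro!: derivative_eq_intros simp: algebra_simps)

lemma d1_deriv: "(d1 a b has_field_derivative d2 a b \<rho>) (at \<rho>)"
  unfolding d1_def[abs_def] d2_def
  by (auto intro!: derivative_eq_intros simp: algebra_simps rsub numeral_2_eq_2 split: if_splits)

lemma pow_m1: "real a * x ^ (a - 1) * x = real a * (x::real) ^ a"
  by (cases a) auto
lemma pow_m2: "real a * (real a - 1) * x ^ (a - 2) * x = real a * (real a - 1) * (x::real) ^ (a - 1)"
  by (cases a; cases "a - 1") (auto simp: numeral_2_eq_2)
lemma tri_pow: "tri a * x ^ (a - 1) * x = tri a * (x::real) ^ a"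
  by (cases a) (auto simp: tri_def)

lemma tri_add: "tri (a + b) = tri a + tri b + real a * real b"
proof -
  have "real (a + b) * (real (a + b) - 1) = real a * (real a - 1) + real b * (real b - 1) + 2 * (real a * real b)"
    by (simp add: algebra_simps)
  thus ?thesis unfolding tri_def by (simp add: add_divide_distrib)
qed

lemma d2_Lf: "\<rho> * (1 - \<rho>) / 2 * d2 a b \<rho> = - Lf (a + b) a \<rho>"
proof -
  define s where "s = 1 - \<rho>"
  have "\<rho> * s / 2 * d2 a b \<rho> = tri a * \<rho> ^ (a - 1) * s ^ b * s
      - (real a * \<rho> ^ (a - 1) * \<rho>) * (real b * s ^ (b - 1) * s)
      + tri b * \<rho> ^ a * \<rho> * s ^ (b - 1)"
  proof -
    have "\<rho> * s / 2 * d2 a b \<rho> = (real a * (real a - 1) * \<rho> ^ (a - 2) * \<rho>) * s ^ b * s / 2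
      - (real a * \<rho> ^ (a - 1) * \<rho>) * (real b * s ^ (b - 1) * s)
      + (real b * (real b - 1) * s ^ (b - 2) * s) * \<rho> ^ a * \<rho> / 2"
      unfolding d2_def s_def by (simp add: field_simps)
    also have "\<dots> = tri a * \<rho> ^ (a - 1) * s ^ b * s
      - (real a * \<rho> ^ (a - 1) * \<rho>) * (real b * s ^ (b - 1) * s)
      + tri b * \<rho> ^ a * \<rho> * s ^ (b - 1)"
      unfolding pow_m2 tri_def by (simp add: field_simps)
    finally show ?thesis .
  qed
  also have "\<dots> = tri a * \<rho> ^ (a - 1) * s ^ b - (tri a * \<rho> ^ (a - 1) * \<rho>) * s ^ b
      - (real a * \<rho> ^ a) * (real b * s ^ b)
      + tri b * \<rho> ^ a * s ^ (b - 1) - (tri b * s ^ (b - 1) * s) * \<rho> ^ a"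
    unfolding pow_m1 s_def by (simp add: algebra_simps)
  also have "\<dots> = - Lf (a + b) a \<rho>"
    unfolding tri_pow Lf_def s_def tri_add by (simp add: algebra_simps)
  finally show ?thesis unfolding s_def .
qed



lemma torus_eq: "torus N = Pi\<^sub>E UNIV (\<lambda>_. {0..<int N})"
  unfolding torus_def PiE_UNIV_domain by auto

lemma finite_torus: "finite (torus N)"
  unfolding torus_eq by (rule finite_PiE) auto

lemma configs_cfg: "configs N = cfg (torus N)"
  unfolding configs_def cfg_def by simp

lemma tor_in: "N > 0 \<Longrightarrow> tor N y \<in> torus N"
  unfolding tor_def torus_def by auto

lemma tor_id: "x \<in> torus N \<Longrightarrow> tor N x = x"
  unfolding tor_def torus_def by auto

definition cube :: "nat \<Rightarrow> ('d::finite \<Rightarrow> int) set" where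
  "cube l = {v. \<forall>i. \<bar>v i\<bar> \<le> int l}"

lemma cube_eq: "cube l = Pi\<^sub>E UNIV (\<lambda>_. {- int l..int l})"
proof -
  have "\<bar>a\<bar> \<le> int l \<longleftrightarrow> a \<in> {- int l..int l}" for a :: int by auto
  thus ?thesis unfolding cube_def PiE_UNIV_domain Pi_def by auto
qed

lemma card_cube: "card (cube l :: ('d::finite \<Rightarrow> int) set) = (2 * l + 1) ^ CARD('d)"
proof -
  have "card (cube l :: ('d \<Rightarrow> int) set) = (\<Prod>i\<in>(UNIV::'d set). card {- int l..int l})"
    unfolding cube_eq by (rule card_PiE) simp
  also have "card {- int l..int l} = 2 * l + 1" by (simp only: card_atLeastAtMost_int; simp)
  also have "(\<Prod>i\<in>(UNIV::'d set). 2 * l + 1) = (2 * l + 1) ^ CARD('d)" by simp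
  finally show ?thesis .
qed

lemma box_eq: "box N l x = (\<lambda>v. tor N (\<lambda>i. x i + v i)) ` cube l"
proof -
  have "box N l x = {tor N (\<lambda>i. x i + v i) | v. v \<in> cube l}" unfolding box_def cube_def by simp
  thus ?thesis by (simp only: Setcompr_eq_image)
qed

lemma box_inj:
  assumes "2 * l + 1 \<le> N"
  shows "inj_on (\<lambda>v. tor N (\<lambda>i. x i + v i)) (cube l)"
proof (rule inj_onI)
  fix v w assume v: "v \<in> cube l" and w: "w \<in> cube l" and e: "tor N (\<lambda>i. x i + v i) = tor N (\<lambda>i. x i + w i)"
  show "v = w"
  proof
    fix i
    have "(x i + v i) mod int N = (x i + w i) mod int N" using fun_cong[OF e, of i] unfolding tor_def by simp
    hence "int N dvd (x i + v i) - (x i + w i)" by (simp add: mod_eq_dvd_iff)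
    hence d: "int N dvd v i - w i" by simp
    have "\<bar>v i\<bar> \<le> int l" "\<bar>w i\<bar> \<le> int l" using v w unfolding cube_def by auto
    hence "\<bar>v i - w i\<bar> \<le> 2 * int l" by arith
    hence lt: "\<bar>v i - w i\<bar> < int N" using assms by linarith
    show "v i = w i"
    proof (rule ccontr)
      assume "v i \<noteq> w i"
      hence "v i - w i \<noteq> 0" by simp
      hence "\<bar>int N\<bar> \<le> \<bar>v i - w i\<bar>" using dvd_imp_le_int[OF _ d] by blast
      thus False using lt by simp
    qed
  qed
qed

lemma card_box:
  assumes "2 * l + 1 \<le> N"
  shows "card (box N l x :: ('d::finite \<Rightarrow> int) set) = (2 * l + 1) ^ CARD('d)"
  unfolding box_eq card_image[OF box_inj[OF assms]] card_cube ..

lemma box_sub: "N > 0 \<Longrightarrow> box N l x \<subseteq> torus N"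
  unfolding box_eq by (rule image_subsetI) (rule tor_in)

lemma center_in_box: "x \<in> torus N \<Longrightarrow> x \<in> box N l x"
proof -
  assume x: "x \<in> torus N"
  show ?thesis unfolding box_def mem_Collect_eq
    by (intro exI[of _ "\<lambda>_. 0::int"] conjI) (simp_all add: tor_id[OF x])
qed

lemma shift_in_box: "\<forall>i. \<bar>a i\<bar> \<le> int l \<Longrightarrow> tor N (\<lambda>i. x i + a i) \<in> box N l x"
  unfolding box_eq by (rule imageI) (simp add: cube_def)

lemma finite_box: "N > 0 \<Longrightarrow> finite (box N l x)"
  by (rule finite_subset[OF box_sub finite_torus])

lemma card_cfg: "finite S \<Longrightarrow> card (cfg S) = 2 ^ card S"
proof (induction S rule: finite_induct)
  case empty thus ?case by (simp add: cfg_empty)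
next
  case (insert t S)
  have "card (cfg (insert t S)) = card (cfg S \<times> (UNIV :: bool set))"
    unfolding cfg_insert[OF insert(2)] by (rule card_image[OF cfg_inj[OF insert(2)]])
  thus ?case using insert by (simp add: card_cartesian_product)
qed

lemma prod_if_pow:
  assumes "finite S"
  shows "(\<Prod>z\<in>S. if P z then a else b) = a ^ card {z\<in>S. P z} * b ^ (card S - card {z\<in>S. P z})"
proof -
  have "(\<Prod>z\<in>S. if P z then a else b) = (\<Prod>z\<in>S \<inter> {z. P z}. a) * (\<Prod>z\<in>S \<inter> - {z. P z}. b)"
    by (rule prod.If_cases[OF assms])
  also have "\<dots> = a ^ card {z\<in>S. P z} * b ^ card {z\<in>S. \<not> P z}"
  proof -
    have "S \<inter> {z. P z} = {z\<in>S. P z}" "S \<inter> - {z. P z} = {z\<in>S. \<not> P z}" by auto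
    thus ?thesis by simp
  qed
  also have "card {z\<in>S. \<not> P z} = card S - card {z\<in>S. P z}"
  proof -
    have e: "S = {z\<in>S. P z} \<union> {z\<in>S. \<not> P z}" by auto
    have "card ({z\<in>S. P z} \<union> {z\<in>S. \<not> P z}) = card {z\<in>S. P z} + card {z\<in>S. \<not> P z}"
      by (rule card_Un_disjoint) (use assms in auto)
    hence "card S = card {z\<in>S. P z} + card {z\<in>S. \<not> P z}" by (simp only: e[symmetric])
    thus ?thesis by simp
  qed
  finally show ?thesis .
qed



definition wb :: "real \<Rightarrow> bool \<Rightarrow> real" where "wb r b = (if b then r else 1 - r)"

lemma bern_wb: "bern N r \<xi> = (\<Prod>z\<in>torus N. wb r (\<xi> z))"
  unfolding bern_def wb_def ..

lemma bern_marg: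
  assumes "S \<subseteq> torus N" "dep_on S G"
  shows "(\<Sum>\<xi>\<in>configs N. bern N r \<xi> * G \<xi>) = (\<Sum>\<zeta>\<in>cfg S. (\<Prod>z\<in>S. wb r (\<zeta> z)) * G \<zeta>)"
proof -
  have fS: "finite S" using assms(1) finite_torus finite_subset by blast
  have e: "S \<union> (torus N - S) = torus N" using assms(1) by auto
  have "(\<Sum>\<xi>\<in>cfg (S \<union> (torus N - S)). (\<Prod>z\<in>S \<union> (torus N - S). wb r (\<xi> z)) * G \<xi>)
     = (\<Prod>z\<in>torus N - S. wb r True + wb r False) * (\<Sum>\<xi>\<in>cfg S. (\<Prod>z\<in>S. wb r (\<xi> z)) * G \<xi>)"
    by (rule marginal[OF fS _ _ assms(2)]) (auto simp: finite_torus)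
  thus ?thesis unfolding e configs_cfg bern_wb by (simp add: wb_def)
qed

lemma can_marg:
  assumes "Bx \<subseteq> torus N" "S \<subseteq> Bx" "dep_on S G"
  shows "(\<Sum>\<xi>\<in>configs N. if card {y\<in>Bx. \<xi> y} = k then G \<xi> else 0)
       = 2 ^ card (torus N - Bx) * (\<Sum>\<zeta>\<in>cfg S. G \<zeta> * real (cb (card Bx - card S) k (card {z\<in>S. \<zeta> z})))"
proof -
  have fB: "finite Bx" using assms(1) finite_torus finite_subset by blast
  have fS: "finite S" using assms(2) fB finite_subset by blast
  have e1: "S \<union> (torus N - S) = torus N" using assms by auto
  have e2: "S \<union> (Bx - S) = Bx" using assms by auto
  have e3: "torus N - S - (Bx - S) = torus N - Bx" using assms by auto
  have e4: "card (Bx - S) = card Bx - card S" using assms fS by (simp add: card_Diff_subset)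
  have "(\<Sum>\<xi>\<in>cfg (S \<union> (torus N - S)). if card {z\<in>S \<union> (Bx - S). \<xi> z} = k then G \<xi> else 0)
     = 2 ^ card (torus N - S - (Bx - S)) * (\<Sum>\<zeta>\<in>cfg S. G \<zeta> * real (cb (card (Bx - S)) k (card {z\<in>S. \<zeta> z})))"
    by (rule counting[OF fS _ _ _ assms(3)]) (use assms in \<open>auto simp: finite_torus\<close>)
  thus ?thesis unfolding e1 e2 e3 e4 configs_cfg .
qed

lemma sum_cfg_single: "(\<Sum>\<zeta>\<in>cfg {x}. g \<zeta>) = g ((\<lambda>_. False)(x := True)) + g ((\<lambda>_. False)(x := False))"
  using sum_cfg_insert[of x "{}" g] by (simp add: cfg_empty del: fun_upd_apply)

lemma dep_single: "dep_on {x} (\<lambda>\<xi>. of_bool (\<xi> x))"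
  unfolding dep_on_def by simp

lemma dep_const: "dep_on {} (\<lambda>\<xi>. c)"
  unfolding dep_on_def by simp

lemma bern_one: "(\<Sum>\<xi>\<in>configs N. bern N r \<xi> * 1) = 1"
  using bern_marg[of "{}" N "\<lambda>_. 1" r] dep_const[of 1] by (simp add: cfg_empty)

lemma bern_x: "x \<in> torus N \<Longrightarrow> (\<Sum>\<xi>\<in>configs N. bern N r \<xi> * of_bool (\<xi> x)) = r"
  using bern_marg[of "{x}" N "\<lambda>\<xi>. of_bool (\<xi> x)" r] dep_single[of x]
  by (simp add: sum_cfg_single wb_def)



lemma core:
  fixes A :: "('d::finite \<Rightarrow> int) set"
    and h :: "(('d \<Rightarrow> int) \<Rightarrow> bool) \<Rightarrow> real"
    and N l :: nat and x :: "'d \<Rightarrow> int" and \<eta> :: "('d \<Rightarrow> int) \<Rightarrow> bool" and u :: "('d \<Rightarrow> int) \<Rightarrow> real"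
    and K :: real
  assumes A_fin: "finite A"
    and h_local: "\<And>\<xi> \<xi>'. (\<forall>a\<in>A. \<xi> a = \<xi>' a) \<Longrightarrow> h \<xi> = h \<xi>'"
    and Abox: "\<forall>a\<in>A. \<forall>i. \<bar>a i\<bar> \<le> int l"
    and lN: "2 * l + 1 \<le> N"
    and nA: "2 * card A \<le> (2 * l + 1) ^ CARD('d)"
    and xT: "x \<in> torus N" and \<eta>c: "\<eta> \<in> configs N"
    and K0: "K \<ge> 0"
    and Kb: "\<And>m j \<rho> \<epsilon>. m \<le> card A \<Longrightarrow> j \<le> m \<Longrightarrow> 0 \<le> \<rho> \<Longrightarrow> \<rho> \<le> 1 \<Longrightarrow> 0 < \<epsilon> \<Longrightarrow> \<epsilon> \<le> 1 \<Longrightarrow>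
        2 * real m * \<epsilon> \<le> 1 \<Longrightarrow>
        \<bar>ffr \<rho> \<epsilon> j * ffr (1 - \<rho>) \<epsilon> (m - j) / ffr 1 \<epsilon> m - \<rho> ^ j * (1 - \<rho>) ^ (m - j) - \<epsilon> * Lf m j \<rho>\<bar>
          \<le> K * \<epsilon>\<^sup>2"
  shows "\<bar>cond_exp_block N (1/2) l x (fx N A h u x) \<eta>
                - fx_tilde N A h u x (blockavg N l x \<eta>)
                + chi (blockavg N l x \<eta>) / (2 * (2 * real l + 1) ^ CARD('d))
                  * (deriv ^^ 2) (fx_tilde N A h u x) (blockavg N l x \<eta>)\<bar>
         \<le> 2 ^ card A * (\<Sum>\<xi>\<in>cfg A. \<bar>h \<xi>\<bar>) * K / (2 * real l + 1) ^ (2 * CARD('d))"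
proof -
  define T where "T = (torus N :: ('d \<Rightarrow> int) set)"
  define Bx where "Bx = box N l x"
  define n where "n = (2 * l + 1) ^ CARD('d)"
  define hx where "hx = shift_loc N h x"
  define sh where "sh = (\<lambda>a. tor N (\<lambda>i. x i + a i))"
  define B where "B = sh ` A"
  define m where "m = card B"
  define k where "k = card {y\<in>Bx. \<eta> y}"
  define \<rho> where "\<rho> = real k / real n"
  define \<epsilon> where "\<epsilon> = 1 / real n"
  define c1 where "c1 = loc_exp A h (u x)"
  define c2 where "c2 = deriv (loc_exp A h) (u x)"
  define Mh where "Mh = (\<Sum>\<xi>\<in>cfg A. \<bar>h \<xi>\<bar>)"
  define jj where "jj = (\<lambda>\<zeta>::('d \<Rightarrow> int) \<Rightarrow> bool. card {z\<in>B. \<zeta> z})"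
  have N0: "N > 0" using lN by simp
  have fT: "finite T" unfolding T_def by (rule finite_torus)
  have BxT: "Bx \<subseteq> T" unfolding Bx_def T_def using box_sub[OF N0] .
  have fBx: "finite Bx" unfolding Bx_def using finite_box[OF N0] .
  have cBx: "card Bx = n" unfolding Bx_def n_def by (rule card_box[OF lN])
  have xBx: "x \<in> Bx" unfolding Bx_def using center_in_box[OF xT] .
  have BBx: "B \<subseteq> Bx" unfolding B_def Bx_def sh_def using Abox shift_in_box by blast
  have fB: "finite B" using BBx fBx finite_subset by blast
  have mA: "m \<le> card A" unfolding m_def B_def using card_image_le[OF A_fin] .
  have mn: "m \<le> n" unfolding m_def using card_mono[OF fBx BBx] cBx by simp
  have n0: "n > 0" unfolding n_def by simp
  have kn: "k \<le> n" unfolding k_def using card_mono[OF fBx, of "{y\<in>Bx. \<eta> y}"] cBx by auto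
  have rn: "real n = (2 * real l + 1) ^ CARD('d)" unfolding n_def by (simp add: add.commute)
  have ba: "blockavg N l x \<xi> = real (card {y\<in>Bx. \<xi> y}) / real n" for \<xi>
  proof -
    have "Bx \<inter> {y. \<xi> y} = {y\<in>Bx. \<xi> y}" by auto
    thus ?thesis unfolding blockavg_def Bx_def[symmetric] rn[symmetric] using fBx by simp
  qed
  have \<rho>ba: "blockavg N l x \<eta> = \<rho>" unfolding ba \<rho>_def k_def ..
  have \<rho>01: "0 \<le> \<rho>" "\<rho> \<le> 1" unfolding \<rho>_def using kn n0 by auto
  have \<epsilon>01: "0 < \<epsilon>" "\<epsilon> \<le> 1" unfolding \<epsilon>_def using n0 by auto
  have fxd: "fx N A h u x \<xi> = hx \<xi> - c1 - c2 * (of_bool (\<xi> x) - u x)" for \<xi>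
    unfolding fx_def hx_def c1_def c2_def ..
  have dep_hx: "dep_on B hx"
    unfolding dep_on_def
  proof (intro allI impI)
    fix \<xi> \<xi>' :: "('d \<Rightarrow> int) \<Rightarrow> bool" assume a: "\<forall>z\<in>B. \<xi> z = \<xi>' z"
    have "\<forall>a\<in>A. \<xi> (sh a) = \<xi>' (sh a)" using a unfolding B_def by auto
    thus "hx \<xi> = hx \<xi>'" unfolding hx_def shift_loc_def sh_def by (intro h_local) simp
  qed
  have hxM: "\<bar>hx \<zeta>\<bar> \<le> Mh" for \<zeta>
  proof -
    define r where "r = (\<lambda>a. if a \<in> A then \<zeta> (sh a) else False)"
    have "hx \<zeta> = h r" unfolding hx_def shift_loc_def r_def sh_def by (intro h_local) simp
    moreover have "r \<in> cfg A" unfolding r_def cfg_def by auto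
    moreover have "finite (cfg A)" using finite_cfg[OF A_fin] .
    ultimately show ?thesis unfolding Mh_def by (auto intro: member_le_sum)
  qed
  have Mh0: "Mh \<ge> 0" unfolding Mh_def by (simp add: sum_nonneg)

  define H where "H = (\<lambda>r. \<Sum>\<zeta>\<in>cfg B. hx \<zeta> * pp (jj \<zeta>) (m - jj \<zeta>) r)"
  define H1 where "H1 = (\<lambda>r. \<Sum>\<zeta>\<in>cfg B. hx \<zeta> * d1 (jj \<zeta>) (m - jj \<zeta>) r)"
  define H2 where "H2 = (\<lambda>r. \<Sum>\<zeta>\<in>cfg B. hx \<zeta> * d2 (jj \<zeta>) (m - jj \<zeta>) r)"
  have BT: "B \<subseteq> torus N" using BBx BxT unfolding T_def by simp
  have xTT: "{x} \<subseteq> torus N" using xT by simp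
  have Hm: "(\<Sum>\<xi>\<in>configs N. bern N r \<xi> * hx \<xi>) = H r" for r
  proof -
    have "(\<Sum>\<xi>\<in>configs N. bern N r \<xi> * hx \<xi>) = (\<Sum>\<zeta>\<in>cfg B. (\<Prod>z\<in>B. wb r (\<zeta> z)) * hx \<zeta>)"
      by (rule bern_marg[OF BT dep_hx])
    also have "\<dots> = H r" unfolding H_def
    proof (rule sum.cong[OF refl])
      fix \<zeta> show "(\<Prod>z\<in>B. wb r (\<zeta> z)) * hx \<zeta> = hx \<zeta> * pp (jj \<zeta>) (m - jj \<zeta>) r"
        unfolding wb_def prod_if_pow[OF fB] pp_def jj_def m_def by simp
    qed
    finally show ?thesis .
  qed
  have ftil: "fx_tilde N A h u x r = H r - c1 - c2 * (r - u x)" for r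
  proof -
    have "fx_tilde N A h u x r = (\<Sum>\<xi>\<in>configs N. bern N r \<xi> * hx \<xi> + (c2 * u x - c1) * (bern N r \<xi> * 1)
        + (- c2) * (bern N r \<xi> * of_bool (\<xi> x)))"
      unfolding fx_tilde_def fxd by (rule sum.cong[OF refl]) (simp add: algebra_simps)
    also have "\<dots> = (\<Sum>\<xi>\<in>configs N. bern N r \<xi> * hx \<xi>) + (c2 * u x - c1) * (\<Sum>\<xi>\<in>(configs N :: (('d \<Rightarrow> int) \<Rightarrow> bool) set). bern N r \<xi> * 1)
        + (- c2) * (\<Sum>\<xi>\<in>configs N. bern N r \<xi> * of_bool (\<xi> x))"
      by (simp only: sum.distrib sum_distrib_left)
    also have "\<dots> = H r - c1 - c2 * (r - u x)"
      unfolding Hm bern_one bern_x[OF xT] by (simp add: algebra_simps)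
    finally show ?thesis .
  qed
  have jjm: "jj \<zeta> \<le> m" for \<zeta> unfolding jj_def m_def by (rule card_mono[OF fB]) auto
  have HD: "(H has_field_derivative H1 r) (at r)" for r
    unfolding H_def H1_def by (intro DERIV_sum DERIV_cmult pp_deriv)
  have H1D: "(H1 has_field_derivative H2 r) (at r)" for r
    unfolding H1_def[abs_def] H2_def by (intro DERIV_sum DERIV_cmult d1_deriv)
  have d1f: "deriv (fx_tilde N A h u x) = (\<lambda>r. H1 r - c2)"
  proof
    fix r
    have "((\<lambda>r. H r - c1 - c2 * (r - u x)) has_field_derivative H1 r - c2) (at r)"
      using HD[of r] by (auto intro!: derivative_eq_intros)
    moreover have "fx_tilde N A h u x = (\<lambda>r. H r - c1 - c2 * (r - u x))" using ftil by (intro ext)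
    ultimately show "deriv (fx_tilde N A h u x) r = H1 r - c2" by (simp add: DERIV_imp_deriv)
  qed
  have d2f: "(deriv ^^ 2) (fx_tilde N A h u x) r = H2 r" for r
  proof -
    have "((\<lambda>r. H1 r - c2) has_field_derivative H2 r) (at r)"
      using H1D[of r] by (auto intro!: derivative_eq_intros)
    hence "deriv (\<lambda>r. H1 r - c2) r = H2 r" by (rule DERIV_imp_deriv)
    thus ?thesis by (simp add: numeral_2_eq_2 d1f)
  qed
  define Q where "Q = (2::real) ^ card (torus N - Bx)"
  have Q0: "Q > 0" unfolding Q_def by simp
  define w0 where "w0 = (1/2::real) ^ card T"
  have w00: "w0 > 0" unfolding w0_def by simp
  have bh: "bern N (1/2) \<xi> = w0" for \<xi> :: "('d \<Rightarrow> int) \<Rightarrow> bool"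
  proof -
    have "bern N (1/2) \<xi> = (\<Prod>z\<in>T. (1/2::real))" unfolding bern_def T_def
      by (rule prod.cong) auto
    thus ?thesis unfolding w0_def by simp
  qed
  define Set where "Set = {\<xi>\<in>configs N. blockavg N l x \<xi> = blockavg N l x \<eta>}"
  have Set_eq: "Set = {\<xi>\<in>configs N. card {y\<in>Bx. \<xi> y} = k}"
    unfolding Set_def ba k_def using n0 by simp
  have fC: "finite (configs N)" unfolding configs_cfg by (rule finite_cfg[OF finite_torus])
  have sSet: "(\<Sum>\<xi>\<in>Set. g \<xi>) = (\<Sum>\<xi>\<in>configs N. if card {y\<in>Bx. \<xi> y} = k then g \<xi> else 0)" for g
    unfolding Set_eq by (rule sum.inter_filter[OF fC])
  have S_hx: "(\<Sum>\<xi>\<in>Set. hx \<xi>) = Q * (\<Sum>\<zeta>\<in>cfg B. hx \<zeta> * real (cb (n - m) k (jj \<zeta>)))"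
    unfolding sSet Q_def can_marg[OF BxT[unfolded T_def] BBx dep_hx] cBx m_def jj_def ..
  have S_1: "(\<Sum>\<xi>\<in>Set. 1) = Q * real (n choose k)"
    unfolding sSet Q_def can_marg[OF BxT[unfolded T_def] empty_subsetI dep_const[of 1]] cBx
    by (simp add: cfg_empty cb_def)
  have xsub: "{x} \<subseteq> Bx" using xBx by simp
  have S_x: "(\<Sum>\<xi>\<in>Set. of_bool (\<xi> x)) = Q * real (cb (n - 1) k 1)"
  proof -
    have "(\<Sum>\<xi>\<in>Set. of_bool (\<xi> x)) = Q * (\<Sum>\<zeta>\<in>cfg {x}. of_bool (\<zeta> x) * real (cb (n - 1) k (card {z\<in>{x}. \<zeta> z})))"
      unfolding sSet Q_def can_marg[OF BxT[unfolded T_def] xsub dep_single[of x]] cBx using xBx by simp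
    also have "\<dots> = Q * real (cb (n - 1) k 1)"
      unfolding sum_cfg_single by simp
    finally show ?thesis .
  qed
  have Cpos: "real (n choose k) > 0" using kn by simp
  have ratio_x: "real (cb (n - 1) k 1) / real (n choose k) = \<rho>"
  proof -
    have "real (cb (n - 1) k 1) / real (n choose k)
       = ffr (real k / real n) (1 / real n) 1 * ffr (1 - real k / real n) (1 / real n) (1 - 1) / ffr 1 (1 / real n) 1"
      by (rule ratio_ffr) (use n0 kn in auto)
    thus ?thesis unfolding \<rho>_def by (simp add: ffr_def)
  qed
  have cond: "cond_exp_block N (1/2) l x (fx N A h u x) \<eta>
     = (\<Sum>\<zeta>\<in>cfg B. hx \<zeta> * (real (cb (n - m) k (jj \<zeta>)) / real (n choose k))) + (c2 * u x - c1) - c2 * \<rho>"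
  proof -
    have num: "(\<Sum>\<xi>\<in>Set. bern N (1/2) \<xi> * fx N A h u x \<xi>)
       = w0 * ((\<Sum>\<xi>\<in>Set. hx \<xi>) + (c2 * u x - c1) * (\<Sum>\<xi>\<in>Set. 1) - c2 * (\<Sum>\<xi>\<in>Set. of_bool (\<xi> x)))"
    proof -
      have "(\<Sum>\<xi>\<in>Set. bern N (1/2) \<xi> * fx N A h u x \<xi>)
          = (\<Sum>\<xi>\<in>Set. w0 * hx \<xi> + w0 * (c2 * u x - c1) * 1 - w0 * c2 * of_bool (\<xi> x))"
        unfolding bh fxd by (rule sum.cong[OF refl]) (simp add: algebra_simps)
      thus ?thesis by (simp add: sum.distrib sum_subtractf sum_distrib_left algebra_simps)
    qed
    have den: "(\<Sum>\<xi>\<in>Set. bern N (1/2) \<xi>) = w0 * (\<Sum>\<xi>\<in>Set. 1)"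
      unfolding bh by simp
    have "cond_exp_block N (1/2) l x (fx N A h u x) \<eta>
       = ((\<Sum>\<xi>\<in>Set. hx \<xi>) + (c2 * u x - c1) * (\<Sum>\<xi>\<in>Set. 1) - c2 * (\<Sum>\<xi>\<in>Set. of_bool (\<xi> x))) / (\<Sum>\<xi>\<in>Set. 1)"
      unfolding cond_exp_block_def Set_def[symmetric] num den using w00 by simp
    also have "\<dots> = (\<Sum>\<zeta>\<in>cfg B. hx \<zeta> * real (cb (n - m) k (jj \<zeta>))) / real (n choose k)
         + (c2 * u x - c1) - c2 * (real (cb (n - 1) k 1) / real (n choose k))"
      unfolding S_hx S_1 S_x using Q0 Cpos by (simp add: field_simps)
    also have "\<dots> = (\<Sum>\<zeta>\<in>cfg B. hx \<zeta> * (real (cb (n - m) k (jj \<zeta>)) / real (n choose k))) + (c2 * u x - c1) - c2 * \<rho>"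
      unfolding ratio_x by (simp add: sum_divide_distrib)
    finally show ?thesis .
  qed
  define e where "e = (\<lambda>\<zeta>. real (cb (n - m) k (jj \<zeta>)) / real (n choose k) - pp (jj \<zeta>) (m - jj \<zeta>) \<rho>
       - \<epsilon> * Lf m (jj \<zeta>) \<rho>)"
  have chi_d2: "chi \<rho> / (2 * (2 * real l + 1) ^ CARD('d)) * d2 (jj \<zeta>) (m - jj \<zeta>) \<rho> = - \<epsilon> * Lf m (jj \<zeta>) \<rho>" for \<zeta>
  proof -
    have "chi \<rho> / (2 * (2 * real l + 1) ^ CARD('d)) * d2 (jj \<zeta>) (m - jj \<zeta>) \<rho>
        = \<epsilon> * (\<rho> * (1 - \<rho>) / 2 * d2 (jj \<zeta>) (m - jj \<zeta>) \<rho>)"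
      unfolding chi_def \<epsilon>_def rn[symmetric] by simp
    also have "\<dots> = - \<epsilon> * Lf m (jj \<zeta>) \<rho>" unfolding d2_Lf using jjm[of \<zeta>] by simp
    finally show ?thesis .
  qed
  have main: "cond_exp_block N (1/2) l x (fx N A h u x) \<eta>
                - fx_tilde N A h u x (blockavg N l x \<eta>)
                + chi (blockavg N l x \<eta>) / (2 * (2 * real l + 1) ^ CARD('d))
                  * (deriv ^^ 2) (fx_tilde N A h u x) (blockavg N l x \<eta>)
        = (\<Sum>\<zeta>\<in>cfg B. hx \<zeta> * e \<zeta>)"
  proof -
    have "chi \<rho> / (2 * (2 * real l + 1) ^ CARD('d)) * H2 \<rho> = (\<Sum>\<zeta>\<in>cfg B. hx \<zeta> * (- \<epsilon> * Lf m (jj \<zeta>) \<rho>))"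
      unfolding H2_def sum_distrib_left
    proof (rule sum.cong[OF refl])
      fix \<zeta>
      have "chi \<rho> / (2 * (2 * real l + 1) ^ CARD('d)) * (hx \<zeta> * d2 (jj \<zeta>) (m - jj \<zeta>) \<rho>)
         = hx \<zeta> * (chi \<rho> / (2 * (2 * real l + 1) ^ CARD('d)) * d2 (jj \<zeta>) (m - jj \<zeta>) \<rho>)" by simp
      also have "\<dots> = hx \<zeta> * (- \<epsilon> * Lf m (jj \<zeta>) \<rho>)" unfolding chi_d2 ..
      finally show "chi \<rho> / (2 * (2 * real l + 1) ^ CARD('d)) * (hx \<zeta> * d2 (jj \<zeta>) (m - jj \<zeta>) \<rho>)
         = hx \<zeta> * (- \<epsilon> * Lf m (jj \<zeta>) \<rho>)" .
    qed
    thus ?thesis unfolding \<rho>ba cond ftil d2f H_def e_def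
      by (simp add: algebra_simps sum.distrib sum_subtractf sum_negf)
  qed
  have eb: "\<bar>e \<zeta>\<bar> \<le> K * \<epsilon>\<^sup>2" for \<zeta>
  proof -
    have "real (cb (n - m) k (jj \<zeta>)) / real (n choose k)
      = ffr \<rho> \<epsilon> (jj \<zeta>) * ffr (1 - \<rho>) \<epsilon> (m - jj \<zeta>) / ffr 1 \<epsilon> m"
      unfolding \<rho>_def \<epsilon>_def by (rule ratio_ffr) (use jjm mn kn n0 in auto)
    moreover have "2 * real m * \<epsilon> \<le> 1"
    proof -
      have "2 * m \<le> n" using mA nA unfolding n_def by simp
      hence "2 * real m \<le> real n" by linarith
      thus ?thesis unfolding \<epsilon>_def using n0 by (simp add: field_simps)
    qed
    ultimately show ?thesis unfolding e_def pp_def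
      using Kb[OF mA jjm \<rho>01 \<epsilon>01] by simp
  qed
  have "\<bar>\<Sum>\<zeta>\<in>cfg B. hx \<zeta> * e \<zeta>\<bar> \<le> (\<Sum>\<zeta>\<in>cfg B. Mh * (K * \<epsilon>\<^sup>2))"
  proof -
    have "\<bar>\<Sum>\<zeta>\<in>cfg B. hx \<zeta> * e \<zeta>\<bar> \<le> (\<Sum>\<zeta>\<in>cfg B. \<bar>hx \<zeta> * e \<zeta>\<bar>)" by (rule sum_abs)
    also have "\<dots> \<le> (\<Sum>\<zeta>\<in>cfg B. Mh * (K * \<epsilon>\<^sup>2))"
      by (intro sum_mono abs_mult_le hxM eb)
    finally show ?thesis .
  qed
  also have "\<dots> = 2 ^ m * Mh * K * \<epsilon>\<^sup>2" by (simp add: card_cfg[OF fB] m_def)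
  also have "\<dots> \<le> 2 ^ card A * Mh * K * \<epsilon>\<^sup>2"
    using mA Mh0 K0 by (intro mult_right_mono) (auto intro: power_increasing)
  also have "\<dots> = 2 ^ card A * Mh * K / (2 * real l + 1) ^ (2 * CARD('d))"
    unfolding \<epsilon>_def rn by (simp add: power_mult power2_eq_square power_mult_distrib[symmetric] field_simps)
  finally show ?thesis unfolding main Mh_def .
qed



theorem lemma3p2:
  fixes A :: "('d::finite \<Rightarrow> int) set"
    and h :: "(('d \<Rightarrow> int) \<Rightarrow> bool) \<Rightarrow> real"
    and ell :: "nat \<Rightarrow> nat"
    and u_minus u_plus :: real
  assumes A_fin: "finite A"
    and h_local: "\<And>\<xi> \<xi>'. (\<forall>a\<in>A. \<xi> a = \<xi>' a) \<Longrightarrow> h \<xi> = h \<xi>'"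
    and u_bounds: "0 < u_minus" "u_minus < u_plus" "u_plus < 1"
    and ell_inf: "filterlim ell at_top sequentially"
    and ell_small: "(\<lambda>N. real (ell N) / real N) \<longlonglongrightarrow> 0"
  shows "\<exists>C>0. \<forall>\<^sub>F N in sequentially.
           \<forall>u :: ('d \<Rightarrow> int) \<Rightarrow> real. (\<forall>x\<in>torus N. u_minus \<le> u x \<and> u x \<le> u_plus) \<longrightarrow>
           (\<forall>x\<in>torus N. \<forall>\<eta>\<in>configs N.
              \<bar>cond_exp_block N (1/2) (ell N) x (fx N A h u x) \<eta>
                - fx_tilde N A h u x (blockavg N (ell N) x \<eta>)
                + chi (blockavg N (ell N) x \<eta>) / (2 * (2 * real (ell N) + 1) ^ CARD('d))
                  * (deriv ^^ 2) (fx_tilde N A h u x) (blockavg N (ell N) x \<eta>)\<bar>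
              \<le> C / real (ell N) ^ (2 * CARD('d)))"
proof -
  define MA where "MA = (\<Sum>a\<in>A. \<Sum>i\<in>(UNIV::'d set). nat \<bar>a i\<bar>)"
  have MA: "\<forall>a\<in>A. \<forall>i. \<bar>a i\<bar> \<le> int MA"
  proof (intro ballI allI)
    fix a i assume a: "a \<in> A"
    have "nat \<bar>a i\<bar> \<le> (\<Sum>i\<in>(UNIV::'d set). nat \<bar>a i\<bar>)" by (rule member_le_sum) auto
    also have "\<dots> \<le> MA" unfolding MA_def using a A_fin by (intro member_le_sum) auto
    finally show "\<bar>a i\<bar> \<le> int MA" by linarith
  qed
  have "\<forall>m. \<exists>K. \<forall>j\<le>m. \<forall>\<rho> \<epsilon>. 0 \<le> \<rho> \<and> \<rho> \<le> 1 \<and> 0 < \<epsilon> \<and> \<epsilon> \<le> 1 \<and> 2 * real m * \<epsilon> \<le> 1 \<longrightarrow>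
     \<bar>ffr \<rho> \<epsilon> j * ffr (1 - \<rho>) \<epsilon> (m - j) / ffr 1 \<epsilon> m - \<rho> ^ j * (1 - \<rho>) ^ (m - j) - \<epsilon> * Lf m j \<rho>\<bar>
       \<le> K * \<epsilon>\<^sup>2" using poly_main by blast
  then obtain Kf where Kf: "\<And>m j \<rho> \<epsilon>. j \<le> m \<Longrightarrow> 0 \<le> \<rho> \<Longrightarrow> \<rho> \<le> 1 \<Longrightarrow> 0 < \<epsilon> \<Longrightarrow> \<epsilon> \<le> 1 \<Longrightarrow>
        2 * real m * \<epsilon> \<le> 1 \<Longrightarrow>
     \<bar>ffr \<rho> \<epsilon> j * ffr (1 - \<rho>) \<epsilon> (m - j) / ffr 1 \<epsilon> m - \<rho> ^ j * (1 - \<rho>) ^ (m - j) - \<epsilon> * Lf m j \<rho>\<bar>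
       \<le> Kf m * \<epsilon>\<^sup>2" by metis
  define K where "K = (\<Sum>m\<le>card A. \<bar>Kf m\<bar>)"
  have K0: "K \<ge> 0" unfolding K_def by (simp add: sum_nonneg)
  have Kb: "\<bar>ffr \<rho> \<epsilon> j * ffr (1 - \<rho>) \<epsilon> (m - j) / ffr 1 \<epsilon> m - \<rho> ^ j * (1 - \<rho>) ^ (m - j) - \<epsilon> * Lf m j \<rho>\<bar>
       \<le> K * \<epsilon>\<^sup>2"
    if "m \<le> card A" "j \<le> m" "0 \<le> \<rho>" "\<rho> \<le> 1" "0 < \<epsilon>" "\<epsilon> \<le> 1" "2 * real m * \<epsilon> \<le> 1" for m j \<rho> \<epsilon>
  proof -
    have "Kf m \<le> \<bar>Kf m\<bar>" by simp
    also have "\<bar>Kf m\<bar> \<le> K" unfolding K_def using that(1) by (intro member_le_sum) auto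
    finally have "Kf m * \<epsilon>\<^sup>2 \<le> K * \<epsilon>\<^sup>2" by (intro mult_right_mono) auto
    with Kf[OF that(2-7)] show ?thesis by linarith
  qed
  define Mh where "Mh = (\<Sum>\<xi>\<in>cfg A. \<bar>h \<xi>\<bar>)"
  have Mh0: "Mh \<ge> 0" unfolding Mh_def by (simp add: sum_nonneg)
  define C where "C = 2 ^ card A * Mh * K + 1"
  have C0: "C > 0" unfolding C_def using Mh0 K0 by (simp add: add_nonneg_pos)
  have ev1: "\<forall>\<^sub>F N in sequentially. MA + card A + 1 \<le> ell N"
    using ell_inf unfolding filterlim_at_top by blast
  have ev2: "\<forall>\<^sub>F N in sequentially. real (ell N) / real N < 1/3"
    by (rule order_tendstoD(2)[OF ell_small]) simp
  have ev3: "\<forall>\<^sub>F N in sequentially. N > (0::nat)" by (rule eventually_gt_at_top)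
  show ?thesis
  proof (intro exI[of _ C] conjI C0)
    show "\<forall>\<^sub>F N in sequentially.
           \<forall>u :: ('d \<Rightarrow> int) \<Rightarrow> real. (\<forall>x\<in>torus N. u_minus \<le> u x \<and> u x \<le> u_plus) \<longrightarrow>
           (\<forall>x\<in>torus N. \<forall>\<eta>\<in>configs N.
              \<bar>cond_exp_block N (1/2) (ell N) x (fx N A h u x) \<eta>
                - fx_tilde N A h u x (blockavg N (ell N) x \<eta>)
                + chi (blockavg N (ell N) x \<eta>) / (2 * (2 * real (ell N) + 1) ^ CARD('d))
                  * (deriv ^^ 2) (fx_tilde N A h u x) (blockavg N (ell N) x \<eta>)\<bar>
              \<le> C / real (ell N) ^ (2 * CARD('d)))"
      using ev1 ev2 ev3
    proof eventually_elim
      case (elim N)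
      define l where "l = ell N"
      have l1: "MA + card A + 1 \<le> l" using elim(1) unfolding l_def .
      have "real l < real N / 3" using elim(2,3) unfolding l_def by (simp add: field_simps)
      hence lN: "2 * l + 1 \<le> N" using l1 by linarith
      have Abox: "\<forall>a\<in>A. \<forall>i. \<bar>a i\<bar> \<le> int l"
      proof (intro ballI allI)
        fix a i assume "a \<in> A"
        hence "\<bar>a i\<bar> \<le> int MA" using MA by blast
        moreover have "int MA \<le> int l" using l1 by simp
        ultimately show "\<bar>a i\<bar> \<le> int l" by linarith
      qed
      have d0: "CARD('d) > 0" by simp
      have "2 * card A \<le> 2 * l + 1" using l1 by linarith
      also have "\<dots> \<le> (2 * l + 1) ^ CARD('d)" by (rule self_le_power) (use d0 in auto)
      finally have nA: "2 * card A \<le> (2 * l + 1) ^ CARD('d)" .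
      show ?case
      proof (intro allI impI ballI)
        fix u :: "('d \<Rightarrow> int) \<Rightarrow> real" and x :: "'d \<Rightarrow> int" and \<eta> :: "('d \<Rightarrow> int) \<Rightarrow> bool"
        assume xT: "x \<in> torus N" and \<eta>c: "\<eta> \<in> configs N"
        have "\<bar>cond_exp_block N (1/2) l x (fx N A h u x) \<eta>
                - fx_tilde N A h u x (blockavg N l x \<eta>)
                + chi (blockavg N l x \<eta>) / (2 * (2 * real l + 1) ^ CARD('d))
                  * (deriv ^^ 2) (fx_tilde N A h u x) (blockavg N l x \<eta>)\<bar>
           \<le> 2 ^ card A * Mh * K / (2 * real l + 1) ^ (2 * CARD('d))"
          unfolding Mh_def by (rule core[OF A_fin h_local Abox lN nA xT \<eta>c K0 Kb])
        also have "\<dots> \<le> C / real l ^ (2 * CARD('d))"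
        proof (rule frac_le)
          show "0 \<le> C" using C0 by simp
          show "2 ^ card A * Mh * K \<le> C" unfolding C_def by simp
          show "0 < real l ^ (2 * CARD('d))" using l1 by simp
          show "real l ^ (2 * CARD('d)) \<le> (2 * real l + 1) ^ (2 * CARD('d))"
            by (rule power_mono) auto
        qed
        finally show "\<bar>cond_exp_block N (1/2) (ell N) x (fx N A h u x) \<eta>
                - fx_tilde N A h u x (blockavg N (ell N) x \<eta>)
                + chi (blockavg N (ell N) x \<eta>) / (2 * (2 * real (ell N) + 1) ^ CARD('d))
                  * (deriv ^^ 2) (fx_tilde N A h u x) (blockavg N (ell N) x \<eta>)\<bar>
              \<le> C / real (ell N) ^ (2 * CARD('d))" unfolding l_def .
      qed
    qed
  qed
qed


end
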